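(* Let $\mathfrak{L}$ be a class of groups closed under finite index subgroups, let $I:\mathfrak{L}\to\mathbb{R}$ be an invariant, and let $G\in\mathfrak{L}$. Define \[\tilde{I}(G)=\inf_{H\leqslant_f G}\frac{I(H)}{|G:H|},\qquad \tilde{J}(G)=\inf_{H\trianglelefteq_f G}\frac{I(H)}{|G:H|},\] where the first infimum is over all finite index subgroups $H$ of $G$ and the second over all finite index normal subgroups of $G$. If $I$ is submultiplicative with respect to finite index subgroups, then $\tilde{I}(G)=\tilde{J}(G)$. If $I$ is submultiplicative with respect to finite index normal subgroups, then $\tilde{I}(G)=\tilde{J}(G)$.
   Context: $I$ is submultiplicative with respect to finite index (resp. finite index normal) subgroups if $\frac{I(H)}{|G:H|}\le I(G)$ for every $G\in\mathfrak{L}$ and every finite index (resp. finite index normal) subgroup $H$ of $G$. $\mathfrak{L}$ closed under finite index subgroups means that if $G\in\mathfrak{L}$ and $H$ has finite index in $G$ then $H\in\mathfrak{L}$. *)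

theory Defs
  imports "HOL-Algebra.Algebra" "HOL-Library.Extended_Real"
begin

definition fin_index_subgroup :: "'a set \<Rightarrow> 'a monoid \<Rightarrow> bool" where
  "fin_index_subgroup H G \<longleftrightarrow> subgroup H G \<and> finite (rcosets\<^bsub>G\<^esub> H)"

definition fin_index_normal :: "'a set \<Rightarrow> 'a monoid \<Rightarrow> bool" where
  "fin_index_normal H G \<longleftrightarrow> normal H G \<and> finite (rcosets\<^bsub>G\<^esub> H)"

definition group_index :: "'a monoid \<Rightarrow> 'a set \<Rightarrow> nat" where
  "group_index G H = card (rcosets\<^bsub>G\<^esub> H)"

definition class_of_groups :: "('a monoid \<Rightarrow> bool) \<Rightarrow> bool" where
  "class_of_groups L \<longleftrightarrow> (\<forall>G. L G \<longrightarrow> group G)"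

definition closed_fin_index :: "('a monoid \<Rightarrow> bool) \<Rightarrow> bool" where
  "closed_fin_index L \<longleftrightarrow>
     (\<forall>G H. L G \<longrightarrow> fin_index_subgroup H G \<longrightarrow> L (G\<lparr>carrier := H\<rparr>))"

definition is_invariant :: "('a monoid \<Rightarrow> bool) \<Rightarrow> ('a monoid \<Rightarrow> real) \<Rightarrow> bool" where
  "is_invariant L I \<longleftrightarrow> (\<forall>G G'. L G \<longrightarrow> L G' \<longrightarrow> G \<cong> G' \<longrightarrow> I G = I G')"

definition submult_fin_index :: "('a monoid \<Rightarrow> bool) \<Rightarrow> ('a monoid \<Rightarrow> real) \<Rightarrow> bool" where
  "submult_fin_index L I \<longleftrightarrow>
     (\<forall>G H. L G \<longrightarrow> fin_index_subgroup H G \<longrightarrow>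
        I (G\<lparr>carrier := H\<rparr>) / real (group_index G H) \<le> I G)"

definition submult_fin_index_normal :: "('a monoid \<Rightarrow> bool) \<Rightarrow> ('a monoid \<Rightarrow> real) \<Rightarrow> bool" where
  "submult_fin_index_normal L I \<longleftrightarrow>
     (\<forall>G H. L G \<longrightarrow> fin_index_normal H G \<longrightarrow>
        I (G\<lparr>carrier := H\<rparr>) / real (group_index G H) \<le> I G)"

text \<open>The infima are taken in the extended reals (they may be -\<infinity>).\<close>
definition I_tilde :: "('a monoid \<Rightarrow> real) \<Rightarrow> 'a monoid \<Rightarrow> ereal" where
  "I_tilde I G = (INF H \<in> {H. fin_index_subgroup H G}.
      ereal (I (G\<lparr>carrier := H\<rparr>) / real (group_index G H)))"

definition J_tilde :: "('a monoid \<Rightarrow> real) \<Rightarrow> 'a monoid \<Rightarrow> ereal" where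
  "J_tilde I G = (INF H \<in> {H. fin_index_normal H G}.
      ereal (I (G\<lparr>carrier := H\<rparr>) / real (group_index G H)))"

end

theory Submission imports Defs begin

lemma (in group) core_exists:
  assumes HG: "subgroup H G" and fin: "finite (rcosets H)"
  shows "\<exists>N. N \<lhd> G \<and> N \<subseteq> H \<and> finite (rcosets N)"
proof -
  interpret Hs: subgroup H G by fact
  define N where "N = {g \<in> carrier G. \<forall>x\<in>carrier G. x \<otimes> g \<otimes> inv x \<in> H}"
  have NH: "N \<subseteq> H"
  proof
    fix g assume "g \<in> N"
    then have g: "g \<in> carrier G" and "\<forall>x\<in>carrier G. x \<otimes> g \<otimes> inv x \<in> H" unfolding N_def by auto
    then have "\<one> \<otimes> g \<otimes> inv \<one> \<in> H" by blast
    then show "g \<in> H" using g by simp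
  qed
  have canc: "inv x \<otimes> (x \<otimes> y) = y" "x \<otimes> (inv x \<otimes> y) = y" if "x \<in> carrier G" "y \<in> carrier G" for x y
    using that by (simp_all add: m_assoc[symmetric])
  have conj: "x \<otimes> (a \<otimes> b) \<otimes> inv x = (x \<otimes> a \<otimes> inv x) \<otimes> (x \<otimes> b \<otimes> inv x)"
    if "x \<in> carrier G" "a \<in> carrier G" "b \<in> carrier G" for x a b
  proof -
    have "(x \<otimes> a \<otimes> inv x) \<otimes> (x \<otimes> b \<otimes> inv x) = x \<otimes> a \<otimes> (inv x \<otimes> x) \<otimes> b \<otimes> inv x"
      using that by (simp add: m_assoc canc)
    also have "\<dots> = x \<otimes> (a \<otimes> b) \<otimes> inv x" using that by (simp add: m_assoc[symmetric])
    finally show ?thesis by simp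
  qed
  have conjinv: "x \<otimes> inv a \<otimes> inv x = inv (x \<otimes> a \<otimes> inv x)"
    if "x \<in> carrier G" "a \<in> carrier G" for x a
    using that by (simp add: inv_mult_group m_assoc)
  have sub: "subgroup N G"
  proof
    show "N \<subseteq> carrier G" unfolding N_def by auto
    show "\<one> \<in> N" unfolding N_def by auto
    fix a b assume a: "a \<in> N" and b: "b \<in> N"
    show "a \<otimes> b \<in> N" unfolding N_def
    proof (intro CollectI conjI ballI)
      show "a \<otimes> b \<in> carrier G" using a b unfolding N_def by auto
      fix x assume x: "x \<in> carrier G"
      have "x \<otimes> a \<otimes> inv x \<in> H" "x \<otimes> b \<otimes> inv x \<in> H" using a b x unfolding N_def by auto
      then show "x \<otimes> (a \<otimes> b) \<otimes> inv x \<in> H" using conj[OF x] a b unfolding N_def by auto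
    qed
  next
    fix a assume a: "a \<in> N"
    show "inv a \<in> N" unfolding N_def
    proof (intro CollectI conjI ballI)
      show "inv a \<in> carrier G" using a unfolding N_def by auto
      fix x assume x: "x \<in> carrier G"
      have "x \<otimes> a \<otimes> inv x \<in> H" using a x unfolding N_def by auto
      then show "x \<otimes> inv a \<otimes> inv x \<in> H" using conjinv[OF x] a unfolding N_def by auto
    qed
  qed
  have nor: "N \<lhd> G"
    unfolding normal_inv_iff
  proof (intro conjI ballI sub)
    fix y h assume y: "y \<in> carrier G" and h: "h \<in> N"
    show "y \<otimes> h \<otimes> inv y \<in> N" unfolding N_def
    proof (intro CollectI conjI ballI)
      show "y \<otimes> h \<otimes> inv y \<in> carrier G" using y h unfolding N_def by auto
      fix x assume x: "x \<in> carrier G"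
      have "(x \<otimes> y) \<otimes> h \<otimes> inv (x \<otimes> y) \<in> H" using h x y unfolding N_def by auto
      moreover have "(x \<otimes> y) \<otimes> h \<otimes> inv (x \<otimes> y) = x \<otimes> (y \<otimes> h \<otimes> inv y) \<otimes> inv x"
        using x y h unfolding N_def by (simp add: inv_mult_group m_assoc)
      ultimately show "x \<otimes> (y \<otimes> h \<otimes> inv y) \<otimes> inv x \<in> H" by simp
    qed
  qed
  define \<psi> where "\<psi> g = restrict (\<lambda>D. D #> g) (rcosets H)" for g
  have \<psi>in: "\<psi> g \<in> rcosets H \<rightarrow>\<^sub>E rcosets H" if g: "g \<in> carrier G" for g
  proof
    fix D assume "D \<in> rcosets H"
    then obtain x where x: "x \<in> carrier G" "D = H #> x" unfolding RCOSETS_def by auto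
    then have "D #> g = H #> (x \<otimes> g)" using g by (simp add: coset_mult_assoc Hs.subset)
    then show "\<psi> g D \<in> rcosets H" using \<open>D \<in> rcosets H\<close> x g
      unfolding \<psi>_def by (auto intro: rcosetsI)
  qed (simp add: \<psi>_def)
  have key: "N #> g = N #> g'" if g: "g \<in> carrier G" and g': "g' \<in> carrier G"
    and eq: "\<psi> g = \<psi> g'" for g g'
  proof -
    have "g' \<otimes> inv g \<in> N" unfolding N_def
    proof (intro CollectI conjI ballI)
      show "g' \<otimes> inv g \<in> carrier G" using g g' by auto
      fix x assume x: "x \<in> carrier G"
      have "\<psi> g (H #> x) = \<psi> g' (H #> x)" using eq by simp
      moreover have "H #> x \<in> rcosets H" using x by (simp add: rcosetsI Hs.subset)
      ultimately have "(H #> x) #> g = (H #> x) #> g'" unfolding \<psi>_def by simp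
      then have "H #> (x \<otimes> g) = H #> (x \<otimes> g')" using x g g' by (simp add: coset_mult_assoc Hs.subset)
      then have "x \<otimes> g' \<in> H #> (x \<otimes> g)" using x g g' by (simp add: rcos_self HG)
      then have "(x \<otimes> g') \<otimes> inv (x \<otimes> g) \<in> H" using x g g' Hs.rcos_module_imp is_group by auto
      moreover have "(x \<otimes> g') \<otimes> inv (x \<otimes> g) = x \<otimes> (g' \<otimes> inv g) \<otimes> inv x"
        using x g g' by (simp add: inv_mult_group m_assoc)
      ultimately show "x \<otimes> (g' \<otimes> inv g) \<otimes> inv x \<in> H" by simp
    qed
    then have "g' \<in> N #> g" using subgroup.rcos_module_rev[OF sub is_group g g'] by simp
    then show ?thesis using repr_independence[OF _ g sub] by simp
  qed
  define \<chi> where "\<chi> f = N #> (SOME g. g \<in> carrier G \<and> \<psi> g = f)" for f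
  have "rcosets N = \<chi> ` (\<psi> ` carrier G)"
  proof -
    have "\<chi> (\<psi> g) = N #> g" if g: "g \<in> carrier G" for g
    proof -
      have "\<exists>g'. g' \<in> carrier G \<and> \<psi> g' = \<psi> g" using g by blast
      then have "(SOME g'. g' \<in> carrier G \<and> \<psi> g' = \<psi> g) \<in> carrier G \<and>
                 \<psi> (SOME g'. g' \<in> carrier G \<and> \<psi> g' = \<psi> g) = \<psi> g" by (rule someI_ex)
      then show ?thesis unfolding \<chi>_def using key g by blast
    qed
    then show ?thesis unfolding RCOSETS_def by (auto simp: image_image)
  qed
  moreover have "finite (\<psi> ` carrier G)"
  proof (rule finite_subset)
    show "\<psi> ` carrier G \<subseteq> rcosets H \<rightarrow>\<^sub>E rcosets H" using \<psi>in by auto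
    show "finite (rcosets H \<rightarrow>\<^sub>E rcosets H)" using fin by (simp add: finite_PiE)
  qed
  ultimately have "finite (rcosets N)" by simp
  with nor NH show ?thesis by blast
qed

lemma (in group) index_mult:
  assumes HG: "subgroup H G" and NG: "subgroup N G" and NH: "N \<subseteq> H"
    and fin: "finite (rcosets N)"
  shows "finite (rcosets H)" "finite (rcosets\<^bsub>G\<lparr>carrier:=H\<rparr>\<^esub> N)"
    "card (rcosets N) = card (rcosets H) * card (rcosets\<^bsub>G\<lparr>carrier:=H\<rparr>\<^esub> N)"
proof -
  interpret Hs: subgroup H G by fact
  interpret Ns: subgroup N G by fact
  define K where "K = rcosets\<^bsub>G\<lparr>carrier:=H\<rparr>\<^esub> N"
  have K: "K = (\<Union>a\<in>H. {N #> a})" unfolding K_def RCOSETS_def by simp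
  have "K \<subseteq> rcosets N" unfolding K RCOSETS_def using Hs.subset by auto
  then show finK: "finite (rcosets\<^bsub>G\<lparr>carrier:=H\<rparr>\<^esub> N)" using fin finite_subset K_def by blast
  define U where "U C = H #> (SOME g. g \<in> C)" for C
  have "rcosets H = U ` (rcosets N)"
  proof -
    have "U (N #> a) = H #> a" if a: "a \<in> carrier G" for a
    proof -
      have "a \<in> N #> a" using a NG by (rule rcos_self)
      then have "(SOME g. g \<in> N #> a) \<in> N #> a" by (rule someI)
      then have "(SOME g. g \<in> N #> a) \<in> H #> a" using NH unfolding r_coset_def by blast
      then show ?thesis unfolding U_def using repr_independence[OF _ a HG] by simp
    qed
    then show ?thesis unfolding RCOSETS_def by (auto simp: image_iff)
  qed
  then show finH: "finite (rcosets H)" using fin by simp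
  define T where "T D = (\<lambda>g. N #> g) ` D" for D
  have TK: "T (H #> a) = (\<lambda>C. C #> a) ` K" if a: "a \<in> carrier G" for a
  proof -
    have "T (H #> a) = (\<lambda>h. N #> (h \<otimes> a)) ` H" unfolding T_def r_coset_def by auto
    also have "\<dots> = (\<lambda>h. (N #> h) #> a) ` H"
      using a Hs.subset Ns.subset by (intro image_cong refl) (auto simp: coset_mult_assoc)
    also have "\<dots> = (\<lambda>C. C #> a) ` K" unfolding K by auto
    finally show ?thesis .
  qed
  have cardT: "card (T D) = card K" if D: "D \<in> rcosets H" for D
  proof -
    obtain a where a: "a \<in> carrier G" "D = H #> a" using D unfolding RCOSETS_def by auto
    have "inj_on (\<lambda>C. C #> a) K"
    proof (rule inj_onI)
      fix C C' assume C: "C \<in> K" and C': "C' \<in> K" and eq: "C #> a = C' #> a"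
      have sub: "C \<subseteq> carrier G" "C' \<subseteq> carrier G"
        using C C' Hs.subset Ns.subset r_coset_subset_G unfolding K by blast+
      have "C = (C #> a) #> inv a" using sub a by (simp add: coset_mult_assoc)
      also have "\<dots> = (C' #> a) #> inv a" using eq by simp
      also have "\<dots> = C'" using sub a by (simp add: coset_mult_assoc)
      finally show "C = C'" .
    qed
    then show ?thesis using TK[OF a(1)] a(2) by (simp add: card_image)
  qed
  have union: "rcosets N = \<Union> (T ` (rcosets H))"
  proof
    show "rcosets N \<subseteq> \<Union> (T ` (rcosets H))"
    proof
      fix C assume "C \<in> rcosets N"
      then obtain a where a: "a \<in> carrier G" "C = N #> a" unfolding RCOSETS_def by auto
      have "a \<in> H #> a" using a(1) HG by (rule rcos_self)
      moreover have "H #> a \<in> rcosets H" using a(1) Hs.subset by (simp add: rcosetsI)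
      ultimately show "C \<in> \<Union> (T ` (rcosets H))" unfolding T_def using a(2) by blast
    qed
    show "\<Union> (T ` (rcosets H)) \<subseteq> rcosets N"
    proof
      fix C assume "C \<in> \<Union> (T ` (rcosets H))"
      then obtain D g where D: "D \<in> rcosets H" and g: "g \<in> D" and C: "C = N #> g"
        unfolding T_def by auto
      have "D \<subseteq> carrier G" using D Hs.subset is_group by (simp add: Hs.rcosets_carrier)
      then have "g \<in> carrier G" using g by auto
      then show "C \<in> rcosets N" using C Ns.subset by (simp add: rcosetsI)
    qed
  qed
  have disj: "T D1 \<inter> T D2 = {}" if D1: "D1 \<in> rcosets H" and D2: "D2 \<in> rcosets H"
    and ne: "D1 \<noteq> D2" for D1 D2
  proof (rule ccontr)
    assume "T D1 \<inter> T D2 \<noteq> {}"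
    then obtain g1 g2 where g1: "g1 \<in> D1" and g2: "g2 \<in> D2" and eq: "N #> g1 = N #> g2"
      unfolding T_def by auto
    obtain b where b: "b \<in> carrier G" "D2 = H #> b" using D2 unfolding RCOSETS_def by auto
    have sD1: "D1 \<subseteq> carrier G" using D1 Hs.subset is_group by (simp add: Hs.rcosets_carrier)
    have sD2: "D2 \<subseteq> carrier G" using D2 Hs.subset is_group by (simp add: Hs.rcosets_carrier)
    have "g1 \<in> N #> g1" using g1 sD1 NG by (auto intro: rcos_self)
    then have "g1 \<in> N #> g2" using eq by simp
    then have "g1 \<in> H #> g2" using NH unfolding r_coset_def by blast
    moreover have "H #> g2 = D2" using repr_independence[OF _ b(1) HG] g2 b(2) by simp
    ultimately have "g1 \<in> D1 \<inter> D2" using g1 by simp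
    moreover have "disjnt D1 D2" using rcos_disjoint[OF HG] D1 D2 ne unfolding pairwise_def by blast
    ultimately show False unfolding disjnt_def by blast
  qed
  have finT: "finite (T D)" if "D \<in> rcosets H" for D
    using union that fin by (metis Sup_upper finite_subset image_eqI)
  have "card (rcosets N) = (\<Sum>D\<in>rcosets H. card (T D))"
    unfolding union by (rule card_UN_disjoint) (use finH finT disj in auto)
  also have "\<dots> = card (rcosets H) * card K" using cardT by simp
  finally show "card (rcosets N) = card (rcosets H) * card (rcosets\<^bsub>G\<lparr>carrier:=H\<rparr>\<^esub> N)"
    unfolding K_def .
qed

lemma reduce:
  assumes grp: "group G" and cl: "closed_fin_index L" and LG: "L G"
    and sm: "submult_fin_index_normal L I" and fH: "fin_index_subgroup H G"
  shows "\<exists>N. fin_index_normal N G \<and>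
    I (G\<lparr>carrier := N\<rparr>) / real (group_index G N) \<le> I (G\<lparr>carrier := H\<rparr>) / real (group_index G H)"
proof -
  interpret group G by fact
  have HG: "subgroup H G" and finH: "finite (rcosets\<^bsub>G\<^esub> H)" using fH unfolding fin_index_subgroup_def by auto
  obtain N where nN: "N \<lhd> G" and NH: "N \<subseteq> H" and finN: "finite (rcosets\<^bsub>G\<^esub> N)"
    using core_exists[OF HG finH] by blast
  have NG: "subgroup N G" using nN by (rule normal_imp_subgroup)
  note im = index_mult[OF HG NG NH finN]
  define K where "K = G\<lparr>carrier := H\<rparr>"
  have LK: "L K" using cl LG fH unfolding closed_fin_index_def K_def by blast
  have nK: "fin_index_normal N K" unfolding fin_index_normal_def K_def
    using normal_restrict_supergroup[OF HG nN NH] im(2) by simp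
  have "I (K\<lparr>carrier := N\<rparr>) / real (group_index K N) \<le> I K"
    using sm LK nK unfolding submult_fin_index_normal_def by blast
  then have "I (G\<lparr>carrier := N\<rparr>) / real (group_index K N) \<le> I K" by (simp add: K_def)
  then have "I (G\<lparr>carrier := N\<rparr>) / real (group_index K N) / real (group_index G H) \<le> I K / real (group_index G H)"
    by (rule divide_right_mono) simp
  moreover have "group_index G N = group_index G H * group_index K N"
    unfolding group_index_def K_def using im(3) by simp
  ultimately have "I (G\<lparr>carrier := N\<rparr>) / real (group_index G N) \<le> I K / real (group_index G H)"
    by (simp add: divide_divide_eq_left mult.commute)
  moreover have "fin_index_normal N G" unfolding fin_index_normal_def using nN finN by simp
  ultimately show ?thesis unfolding K_def by blast
qed

lemma main_aux:
  assumes grp: "group G" and cl: "closed_fin_index L" and LG: "L G"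
    and sm: "submult_fin_index_normal L I"
  shows "I_tilde I G = J_tilde I G"
proof (rule antisym)
  show "I_tilde I G \<le> J_tilde I G" unfolding I_tilde_def J_tilde_def
    by (rule INF_superset_mono) (auto simp: fin_index_normal_def fin_index_subgroup_def normal_imp_subgroup)
  show "J_tilde I G \<le> I_tilde I G" unfolding I_tilde_def J_tilde_def
  proof (rule INF_mono)
    fix H assume "H \<in> {H. fin_index_subgroup H G}"
    then obtain N where "fin_index_normal N G" and
      "I (G\<lparr>carrier := N\<rparr>) / real (group_index G N) \<le> I (G\<lparr>carrier := H\<rparr>) / real (group_index G H)"
      using reduce[OF grp cl LG sm] by blast
    then show "\<exists>N\<in>{H. fin_index_normal H G}. ereal (I (G\<lparr>carrier := N\<rparr>) / real (group_index G N))
        \<le> ereal (I (G\<lparr>carrier := H\<rparr>) / real (group_index G H))" by auto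
  qed
qed

theorem mainTheorem1:
  fixes L :: "'a monoid \<Rightarrow> bool" and I :: "'a monoid \<Rightarrow> real" and G :: "'a monoid"
  assumes "class_of_groups L"
    and "closed_fin_index L"
    and "is_invariant L I"
    and "L G"
  shows "(submult_fin_index L I \<longrightarrow> I_tilde I G = J_tilde I G)
       \<and> (submult_fin_index_normal L I \<longrightarrow> I_tilde I G = J_tilde I G)"
proof -
  have grp: "group G" using assms(1,4) unfolding class_of_groups_def by blast
  have "submult_fin_index L I \<Longrightarrow> submult_fin_index_normal L I"
    unfolding submult_fin_index_def submult_fin_index_normal_def fin_index_normal_def fin_index_subgroup_def
    by (auto simp: normal_imp_subgroup)
  then show ?thesis using main_aux[OF grp assms(2,4)] by blast
qed

end
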